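(* Under the Sub-Gaussian Mixture Model described in the context, there exist universal constants $C_s,C_g,C_e>0$ such that if $s^2\ge C_s k$, then \[ \max\left\{\frac{\|\mathbf F-\mathbf F^*\|_1}{\|\mathbf F^*\|_1}:\ \eta(\mathbf F)\le\eta(\mathbf F^* ),\ \mathbf F\in\mathcal F\right\}\le C_g\exp\left[-\frac{s^2}{C_e}\right] \] with probability at least $1-\frac32 n^{-1}$.
   Context: Sub-Gaussian norm: for a real random variable $X$, $\|X\|_{\psi_2}=\inf\{t>0:\mathbb E\exp(X^2/t^2)\le 2\}$; for a random vector $\mathbf x\in\mathbb R^m$, $\|\mathbf x\|_{\psi_2}=\sup_{\|\mathbf u\|_2=1}\|\langle\mathbf x,\mathbf u\rangle\|_{\psi_2}$. Model: integers $n\ge 4$, $k\ge 2$ with $k\mid n$; unknown centers $\boldsymbol\mu_1,\dots,\boldsymbol\mu_k\in\mathbb R^d$; unknown labels $\sigma^*:[n]\to[k]$ with $|\{i:\sigma^*(i)=a\}|=n/k$ for every $a$. Observations $\mathbf h_i=\boldsymbol\mu_{\sigma^*(i)}+\mathbf g_i$, $i\in[n]$, with $\mathbf g_i$ independent sub-Gaussian random vectors, $\|\mathbf g_i\|_{\psi_2}\le\tau$. $\Delta=\min_{a\ne b}\|\boldsymbol\mu_a-\boldsymbol\mu_b\|_2$, $s=\Delta/\tau$. Oracle integer program: $\mathcal F=\{\mathbf F\in\{0,1\}^{n\times k}:\mathbf F\mathbf 1_k=\mathbf 1_n\}$; $\mathbf F^*\in\mathcal F$ with $F^*_{ja}=\mathbb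 1\{\sigma^*(j)=a\}$; $\bar{\mathbf h}_i=\boldsymbol\mu_{\sigma^*(i)}+4\mathbf g_i$; $\eta(\mathbf F)=\sum_{j}\sum_{a}\|\bar{\mathbf h}_j-\boldsymbol\mu_a\|_2^2F_{ja}$. $\|\cdot\|_1$ is the entrywise $\ell_1$ norm. *)

theory Defs
  imports "HOL-Probability.Probability"
begin

(* Vectors of R^d are represented as functions nat => real; only coordinates < d matter. *)
definition vinner :: "nat \<Rightarrow> (nat \<Rightarrow> real) \<Rightarrow> (nat \<Rightarrow> real) \<Rightarrow> real" where
  "vinner d x y = (\<Sum>l<d. x l * y l)"

definition vnorm :: "nat \<Rightarrow> (nat \<Rightarrow> real) \<Rightarrow> real" where
  "vnorm d x = sqrt (\<Sum>l<d. (x l)\<^sup>2)"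

(* sub-Gaussian (psi_2) norm of a real random variable; Inf {} = \<infinity> *)
definition psi2 :: "'a measure \<Rightarrow> ('a \<Rightarrow> real) \<Rightarrow> ereal" where
  "psi2 M X = Inf {ereal t | t. t > 0 \<and> (\<integral>\<^sup>+ \<omega>. ennreal (exp ((X \<omega>)\<^sup>2 / t\<^sup>2)) \<partial>M) \<le> 2}"

definition psi2_vec :: "'a measure \<Rightarrow> nat \<Rightarrow> ('a \<Rightarrow> nat \<Rightarrow> real) \<Rightarrow> ereal" where
  "psi2_vec M d x = (SUP u \<in> {u. vnorm d u = 1}. psi2 M (\<lambda>\<omega>. vinner d (x \<omega>) u))"

definition min_sep :: "nat \<Rightarrow> nat \<Rightarrow> (nat \<Rightarrow> nat \<Rightarrow> real) \<Rightarrow> real" where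
  "min_sep d k \<mu> = Min {vnorm d (\<lambda>l. \<mu> a l - \<mu> b l) | a b. a < k \<and> b < k \<and> a \<noteq> b}"

definition Fset :: "nat \<Rightarrow> nat \<Rightarrow> (nat \<Rightarrow> nat \<Rightarrow> real) set" where
  "Fset n k = {F. (\<forall>j a. F j a \<in> {0, 1}) \<and> (\<forall>j a. \<not> (j < n \<and> a < k) \<longrightarrow> F j a = 0)
                  \<and> (\<forall>j<n. (\<Sum>a<k. F j a) = 1)}"

definition Fstar :: "nat \<Rightarrow> nat \<Rightarrow> (nat \<Rightarrow> nat) \<Rightarrow> nat \<Rightarrow> nat \<Rightarrow> real" where
  "Fstar n k \<sigma> = (\<lambda>j a. if j < n \<and> a < k \<and> \<sigma> j = a then 1 else 0)"

definition l1m :: "nat \<Rightarrow> nat \<Rightarrow> (nat \<Rightarrow> nat \<Rightarrow> real) \<Rightarrow> real" where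
  "l1m n k F = (\<Sum>j<n. \<Sum>a<k. \<bar>F j a\<bar>)"

definition eta :: "nat \<Rightarrow> nat \<Rightarrow> nat \<Rightarrow> (nat \<Rightarrow> nat \<Rightarrow> real) \<Rightarrow> (nat \<Rightarrow> nat)
    \<Rightarrow> (nat \<Rightarrow> nat \<Rightarrow> real) \<Rightarrow> (nat \<Rightarrow> nat \<Rightarrow> real) \<Rightarrow> real" where
  "eta n k d \<mu> \<sigma> gw F = (\<Sum>j<n. \<Sum>a<k.
      (vnorm d (\<lambda>l. \<mu> (\<sigma> j) l + 4 * gw j l - \<mu> a l))\<^sup>2 * F j a)"

end

theory Submission
  imports Defs
begin


lemma vnorm_sq: "(vnorm d x)\<^sup>2 = (\<Sum>l<d. (x l)\<^sup>2)"
  unfolding vnorm_def by (simp add: sum_nonneg)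

lemma vnorm_nonneg: "0 \<le> vnorm d x"
  unfolding vnorm_def by (simp add: sum_nonneg)

lemma row_diff:
  "(vnorm d (\<lambda>l. m l + 4 * x l - p l))\<^sup>2 - (vnorm d (\<lambda>l. m l + 4 * x l - m l))\<^sup>2
   = (vnorm d (\<lambda>l. p l - m l))\<^sup>2 - 8 * vinner d x (\<lambda>l. p l - m l)"
  unfolding vnorm_sq vinner_def
  by (simp add: sum_subtractf[symmetric] sum_distrib_left power2_eq_square algebra_simps)

lemma vinner_scale:
  fixes v :: "nat \<Rightarrow> real"
  shows "vinner d x v = vnorm d v * vinner d x (\<lambda>l. v l / vnorm d v)"
proof (cases "vnorm d v = 0")
  case True
  then have "(\<Sum>l<d. (v l)\<^sup>2) = 0" using vnorm_sq[of d v] by simp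
  then have "\<forall>l\<in>{..<d}. (v l)\<^sup>2 = 0" by (subst sum_nonneg_eq_0_iff[symmetric]) auto
  then have "vinner d x v = 0" unfolding vinner_def by simp
  then show ?thesis using True by simp
next
  case False
  then show ?thesis unfolding vinner_def by (simp add: sum_divide_distrib[symmetric])
qed

lemma vnorm_unit:
  assumes "vnorm d v \<noteq> 0"
  shows "vnorm d (\<lambda>l. v l / vnorm d v) = 1"
proof -
  have p: "vnorm d v > 0" using assms vnorm_nonneg[of d v] by linarith
  have "(vnorm d (\<lambda>l. v l / vnorm d v))\<^sup>2 = (\<Sum>l<d. (v l / vnorm d v)\<^sup>2)"
    by (rule vnorm_sq)
  also have "\<dots> = (\<Sum>l<d. (v l)\<^sup>2) / (vnorm d v)\<^sup>2"
    by (simp add: power_divide sum_divide_distrib)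
  also have "\<dots> = (vnorm d v)\<^sup>2 / (vnorm d v)\<^sup>2" by (simp add: vnorm_sq)
  also have "\<dots> = 1" using p by simp
  finally have "(vnorm d (\<lambda>l. v l / vnorm d v))\<^sup>2 = 1" .
  then show ?thesis using vnorm_nonneg
    by (metis abs_of_nonneg power2_eq_1_iff real_sqrt_abs real_sqrt_one vnorm_nonneg)
qed

lemma D_lower:
  fixes \<delta> Z :: real shows "\<delta>\<^sup>2 - 8 * (\<delta> * Z) \<ge> \<delta>\<^sup>2 / 2 - 32 * Z\<^sup>2"
proof -
  have "0 \<le> (\<delta> - 8 * Z)\<^sup>2 / 2" by simp
  then show ?thesis by (simp add: power2_eq_square algebra_simps)
qed

lemma Fset_row:
  assumes "F \<in> Fset n k" "j < n" "s < k"
  shows "(\<Sum>a\<in>{..<k}-{s}. F j a) = 1 - F j s"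
proof -
  have "(\<Sum>a<k. F j a) = 1" using assms unfolding Fset_def by auto
  moreover have "(\<Sum>a<k. F j a) = F j s + (\<Sum>a\<in>{..<k}-{s}. F j a)"
    using assms(3) by (subst sum.remove[of _ s]) auto
  ultimately show ?thesis by linarith
qed

lemma Fset_01: "F \<in> Fset n k \<Longrightarrow> F j a = 0 \<or> F j a = 1"
  unfolding Fset_def by auto

lemma l1_row:
  assumes "F \<in> Fset n k" "j < n" "\<sigma> j < k"
  shows "(\<Sum>a<k. \<bar>F j a - Fstar n k \<sigma> j a\<bar>) = 2 * (1 - F j (\<sigma> j))"
proof -
  have nn: "\<And>a. 0 \<le> F j a" using Fset_01[OF assms(1)] by (metis order_refl zero_le_one)
  have le1: "F j (\<sigma> j) \<le> 1" using Fset_01[OF assms(1)] by (metis order_refl zero_le_one)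
  have "(\<Sum>a<k. \<bar>F j a - Fstar n k \<sigma> j a\<bar>) = \<bar>F j (\<sigma> j) - 1\<bar> + (\<Sum>a\<in>{..<k}-{\<sigma> j}. \<bar>F j a - Fstar n k \<sigma> j a\<bar>)"
    using assms by (subst sum.remove[of _ "\<sigma> j"]) (auto simp: Fstar_def)
  also have "(\<Sum>a\<in>{..<k}-{\<sigma> j}. \<bar>F j a - Fstar n k \<sigma> j a\<bar>) = (\<Sum>a\<in>{..<k}-{\<sigma> j}. F j a)"
    by (rule sum.cong) (auto simp: Fstar_def nn)
  finally show ?thesis using Fset_row[OF assms] le1 by simp
qed

lemma l1_F:
  assumes "F \<in> Fset n k" "\<forall>j<n. \<sigma> j < k"
  shows "l1m n k (\<lambda>j a. F j a - Fstar n k \<sigma> j a) = 2 * (\<Sum>j<n. 1 - F j (\<sigma> j))"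
  unfolding l1m_def using l1_row[OF assms(1)] assms(2) by (simp add: sum_distrib_left)

lemma l1_Fstar:
  assumes "\<forall>j<n. \<sigma> j < k"
  shows "l1m n k (Fstar n k \<sigma>) = real n"
proof -
  have "\<And>j. j < n \<Longrightarrow> (\<Sum>a<k. \<bar>Fstar n k \<sigma> j a\<bar>) = 1"
  proof -
    fix j assume j: "j < n"
    have "(\<Sum>a<k. \<bar>Fstar n k \<sigma> j a\<bar>) = (\<Sum>a<k. if a = \<sigma> j then 1 else 0)"
      by (rule sum.cong) (auto simp: Fstar_def j)
    then show "(\<Sum>a<k. \<bar>Fstar n k \<sigma> j a\<bar>) = 1" using assms j by simp
  qed
  then show ?thesis unfolding l1m_def by simp
qed

lemma det_core:
  assumes F: "F \<in> Fset n k" and sk: "\<forall>j<n. \<sigma> j < k"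
    and c: "\<And>j a. j < n \<Longrightarrow> a < k \<Longrightarrow> a \<noteq> \<sigma> j \<Longrightarrow> N j a - N j (\<sigma> j) \<ge> c j"
  shows "(\<Sum>j<n. \<Sum>a<k. N j a * F j a) - (\<Sum>j<n. \<Sum>a<k. N j a * Fstar n k \<sigma> j a)
     \<ge> (\<Sum>j<n. c j * (1 - F j (\<sigma> j)))"
proof -
  have nn: "\<And>j a. 0 \<le> F j a" using Fset_01[OF F] by (metis order_refl zero_le_one)
  have row: "(\<Sum>a<k. N j a * F j a) - (\<Sum>a<k. N j a * Fstar n k \<sigma> j a) \<ge> c j * (1 - F j (\<sigma> j))"
    if j: "j < n" for j
  proof -
    have s: "\<sigma> j < k" using sk j by auto
    have st: "(\<Sum>a<k. N j a * Fstar n k \<sigma> j a) = N j (\<sigma> j)"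
    proof -
      have "(\<Sum>a<k. N j a * Fstar n k \<sigma> j a) = (\<Sum>a<k. if a = \<sigma> j then N j (\<sigma> j) else 0)"
        by (rule sum.cong) (auto simp: Fstar_def j)
      then show ?thesis using s by simp
    qed
    have e1: "(\<Sum>a<k. N j a * F j a) = N j (\<sigma> j) * (\<Sum>a<k. F j a) + (\<Sum>a<k. (N j a - N j (\<sigma> j)) * F j a)"
      by (simp add: sum_distrib_left sum.distrib[symmetric] algebra_simps)
    have e2: "(\<Sum>a<k. F j a) = 1" using F j unfolding Fset_def by auto
    have e3: "(\<Sum>a<k. (N j a - N j (\<sigma> j)) * F j a) = (\<Sum>a\<in>{..<k}-{\<sigma> j}. (N j a - N j (\<sigma> j)) * F j a)"
      using s by (subst sum.remove[of _ "\<sigma> j"]) auto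
    have e4: "(\<Sum>a\<in>{..<k}-{\<sigma> j}. (N j a - N j (\<sigma> j)) * F j a) \<ge> (\<Sum>a\<in>{..<k}-{\<sigma> j}. c j * F j a)"
      by (rule sum_mono) (use c j nn in \<open>auto intro: mult_right_mono\<close>)
    have e5: "(\<Sum>a\<in>{..<k}-{\<sigma> j}. c j * F j a) = c j * (1 - F j (\<sigma> j))"
      using Fset_row[OF F j s] by (simp add: sum_distrib_left[symmetric])
    show ?thesis using st e1 e2 e3 e4 e5 by simp
  qed
  have "(\<Sum>j<n. c j * (1 - F j (\<sigma> j))) \<le> (\<Sum>j<n. (\<Sum>a<k. N j a * F j a) - (\<Sum>a<k. N j a * Fstar n k \<sigma> j a))"
    by (rule sum_mono) (use row in auto)
  then show ?thesis by (simp add: sum_subtractf)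
qed



lemma subg:
  assumes P: "prob_space M" and tp: "\<tau> > 0" and ps: "psi2_vec M d x \<le> ereal \<tau>"
    and u: "vnorm d u = 1 \<or> (\<forall>l. u l = 0)"
  shows "(\<integral>\<^sup>+\<omega>. ennreal (exp ((vinner d (x \<omega>) u)\<^sup>2 / (2*\<tau>\<^sup>2))) \<partial>M) \<le> 2"
proof (cases "vnorm d u = 1")
  case True
  define X where "X = (\<lambda>\<omega>. vinner d (x \<omega>) u)"
  have "psi2 M X \<le> psi2_vec M d x"
    unfolding psi2_vec_def X_def by (rule SUP_upper) (use True in auto)
  also have "\<dots> < ereal (sqrt 2 * \<tau>)"
  proof -
    have "\<tau> < sqrt 2 * \<tau>" using tp by simp
    then have "ereal \<tau> < ereal (sqrt 2 * \<tau>)" by simp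
    then show ?thesis using ps by (rule le_less_trans[rotated])
  qed
  finally have "psi2 M X < ereal (sqrt 2 * \<tau>)" .
  then obtain t where t: "t > 0" "ereal t < ereal (sqrt 2 * \<tau>)"
     "(\<integral>\<^sup>+ \<omega>. ennreal (exp ((X \<omega>)\<^sup>2 / t\<^sup>2)) \<partial>M) \<le> 2"
    unfolding psi2_def Inf_less_iff by auto
  have tt: "t\<^sup>2 \<le> 2 * \<tau>\<^sup>2"
  proof -
    have "t \<le> sqrt 2 * \<tau>" using t(2) by simp
    then have "t\<^sup>2 \<le> (sqrt 2 * \<tau>)\<^sup>2" using t(1) by (intro power_mono) auto
    then show ?thesis by (simp add: power_mult_distrib)
  qed
  have "(\<integral>\<^sup>+\<omega>. ennreal (exp ((X \<omega>)\<^sup>2 / (2*\<tau>\<^sup>2))) \<partial>M) \<le> (\<integral>\<^sup>+ \<omega>. ennreal (exp ((X \<omega>)\<^sup>2 / t\<^sup>2)) \<partial>M)"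
  proof (rule nn_integral_mono)
    fix \<omega>
    have "(X \<omega>)\<^sup>2 / (2*\<tau>\<^sup>2) \<le> (X \<omega>)\<^sup>2 / t\<^sup>2"
      using tt t(1) tp by (intro divide_left_mono) auto
    then show "ennreal (exp ((X \<omega>)\<^sup>2 / (2*\<tau>\<^sup>2))) \<le> ennreal (exp ((X \<omega>)\<^sup>2 / t\<^sup>2))"
      by (intro ennreal_leI) simp
  qed
  then show ?thesis using t(3) unfolding X_def by simp
next
  case False
  then have u0: "\<forall>l. u l = 0" using u by auto
  have "(\<integral>\<^sup>+\<omega>. ennreal (exp ((vinner d (x \<omega>) u)\<^sup>2 / (2*\<tau>\<^sup>2))) \<partial>M) = (\<integral>\<^sup>+\<omega>. 1 \<partial>M)"
    using u0 by (simp add: vinner_def)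
  also have "\<dots> = 1" using P by (simp add: prob_space.emeasure_space_1)
  finally show ?thesis by simp
qed

lemma final_arith:
  fixes \<Lambda> :: real and n k :: nat
  assumes L: "\<Lambda> \<ge> 16 * real k" and k: "k \<ge> 2" and n: "n \<ge> 1"
  defines "Mx \<equiv> max 1 (real n * exp (-\<Lambda>/8))"
  shows "exp (2 * real n * real k * exp (-\<Lambda>/4) - Mx * \<Lambda> / 4) \<le> 1 / real n"
proof -
  have L8: "\<Lambda> \<ge> 8" using L k by linarith
  have np: "real n > 0" using n by simp
  have e8: "exp (-\<Lambda>/8) \<le> 1" using L8 by simp
  have M1: "Mx \<ge> 1" "Mx \<ge> real n * exp (-\<Lambda>/8)" unfolding Mx_def by auto
  have lnn: "ln (real n) \<le> Mx * \<Lambda> / 8"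
  proof -
    have pos: "real n * exp (-\<Lambda>/8) > 0" using np by simp
    have "ln (real n * exp (-\<Lambda>/8)) = ln (real n) - \<Lambda>/8" using np by (simp add: ln_mult)
    moreover have "ln (real n * exp (-\<Lambda>/8)) \<le> real n * exp (-\<Lambda>/8) - 1"
      using pos by (rule ln_le_minus_one)
    ultimately have "ln (real n) \<le> Mx - 1 + \<Lambda>/8" using M1 by linarith
    moreover have "(Mx - 1) * (\<Lambda>/8 - 1) \<ge> 0" using M1 L8 by simp
    ultimately show ?thesis by (simp add: algebra_simps divide_simps)
  qed
  have ee: "exp (-\<Lambda>/4) = exp (-\<Lambda>/8) * exp (-\<Lambda>/8)"
    using exp_add[of "-\<Lambda>/8" "-\<Lambda>/8"] by simp
  have "2 * real n * real k * exp (-\<Lambda>/4) = (2 * real k * exp (-\<Lambda>/8)) * (real n * exp (-\<Lambda>/8))"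
    unfolding ee by (simp add: algebra_simps)
  also have "\<dots> \<le> (2 * real k * exp (-\<Lambda>/8)) * Mx"
    using M1 by (intro mult_left_mono) auto
  also have "\<dots> \<le> (\<Lambda>/8) * Mx"
  proof -
    have "2 * real k * exp (-\<Lambda>/8) \<le> 2 * real k * 1" using e8 by (intro mult_left_mono) auto
    also have "\<dots> \<le> \<Lambda>/8" using L by simp
    finally show ?thesis using M1 by (intro mult_right_mono) auto
  qed
  finally have "2 * real n * real k * exp (-\<Lambda>/4) - Mx * \<Lambda> / 4 \<le> - ln (real n)"
    using lnn by (simp add: algebra_simps)
  then have "exp (2 * real n * real k * exp (-\<Lambda>/4) - Mx * \<Lambda> / 4) \<le> exp (- ln (real n))" by simp
  also have "\<dots> = 1 / real n" using np by (simp add: exp_minus inverse_eq_divide)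
  finally show ?thesis .
qed



lemma vinner_restrict: "vinner d (restrict x {..<d}) u = vinner d x u"
  unfolding vinner_def by (rule sum.cong) auto

lemma vinner_meas: "(\<lambda>x. vinner d x u) \<in> borel_measurable (PiM {..<d} (\<lambda>_. borel))"
  unfolding vinner_def
  by (intro borel_measurable_sum borel_measurable_times measurable_component_singleton) auto

lemma vinner_meas2:
  assumes "\<And>l. l < d \<Longrightarrow> (\<lambda>\<omega>. x \<omega> l) \<in> borel_measurable M"
  shows "(\<lambda>\<omega>. vinner d (x \<omega>) u) \<in> borel_measurable M"
  unfolding vinner_def using assms
  by (intro borel_measurable_sum borel_measurable_times) auto

lemma vnorm_meas2:
  assumes "\<And>l. l < d \<Longrightarrow> (\<lambda>\<omega>. x \<omega> l) \<in> borel_measurable M"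
  shows "(\<lambda>\<omega>. vnorm d (x \<omega>)) \<in> borel_measurable M"
  unfolding vnorm_def using assms
  by (intro borel_measurable_sum borel_measurable_power measurable_compose[OF _ borel_measurable_sqrt]) auto

lemma exp_le_sum_ln:
  fixes c :: "nat \<Rightarrow> real"
  assumes "a < k"
  shows "c a \<le> ln (\<Sum>b<k. exp (c b))"
proof -
  have "exp (c a) \<le> (\<Sum>b<k. exp (c b))"
    using assms by (intro member_le_sum) auto
  moreover have "0 < exp (c a)" by simp
  ultimately have "ln (exp (c a)) \<le> ln (\<Sum>b<k. exp (c b))" by (rule ln_mono)
  then show ?thesis by simp
qed

lemma sum_ln_nonneg:
  fixes c :: "nat \<Rightarrow> real"
  assumes "0 < k" "\<And>b. 0 \<le> c b"
  shows "0 \<le> ln (\<Sum>b<k. exp (c b))"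
proof -
  have "1 \<le> exp (c 0)" using assms by simp
  also have "exp (c 0) \<le> (\<Sum>b<k. exp (c b))" using assms by (intro member_le_sum) auto
  finally show ?thesis by simp
qed



lemma Fset_finite: "finite (Fset n k)"
proof -
  define A where "A = {..<n} \<times> {..<k}"
  define \<phi> where "\<phi> F = restrict (\<lambda>p. F (fst p) (snd p)) A" for F :: "nat \<Rightarrow> nat \<Rightarrow> real"
  have inj: "inj_on \<phi> (Fset n k)"
  proof (rule inj_onI)
    fix F G assume F: "F \<in> Fset n k" and G: "G \<in> Fset n k" and e: "\<phi> F = \<phi> G"
    show "F = G"
    proof (intro ext)
      fix j a
      show "F j a = G j a"
      proof (cases "j < n \<and> a < k")
        case True
        then have "\<phi> F (j, a) = \<phi> G (j, a)" using e by simp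
        then show ?thesis using True by (simp add: \<phi>_def A_def)
      next
        case False
        then show ?thesis using F G unfolding Fset_def by auto
      qed
    qed
  qed
  have "\<phi> ` Fset n k \<subseteq> PiE A (\<lambda>_. {0, 1})"
    unfolding \<phi>_def Fset_def by (auto; meson)
  then have "finite (\<phi> ` Fset n k)"
    by (rule finite_subset) (auto intro: finite_PiE simp: A_def)
  then show ?thesis using inj by (rule finite_imageD)
qed

lemma main:
  fixes M :: "'a measure" and g :: "nat \<Rightarrow> 'a \<Rightarrow> nat \<Rightarrow> real"
  assumes P: "prob_space M" and n4: "n \<ge> 4" and k2: "k \<ge> 2"
    and sk: "\<forall>i<n. \<sigma> i < k"
    and meas: "\<forall>i<n. \<forall>l<d. (\<lambda>\<omega>. g i \<omega> l) \<in> borel_measurable M"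
    and ind: "prob_space.indep_vars M (\<lambda>_. PiM {..<d} (\<lambda>_. borel)) (\<lambda>i \<omega>. restrict (g i \<omega>) {..<d}) {..<n}"
    and tp: "\<tau> > 0" and ps: "\<forall>i<n. psi2_vec M d (g i) \<le> ereal \<tau>"
    and sep: "(min_sep d k \<mu> / \<tau>)\<^sup>2 \<ge> 2048 * real k"
  shows "measure M {\<omega> \<in> space M. \<forall>F \<in> Fset n k.
          eta n k d \<mu> \<sigma> (\<lambda>j. g j \<omega>) F \<le> eta n k d \<mu> \<sigma> (\<lambda>j. g j \<omega>) (Fstar n k \<sigma>) \<longrightarrow>
          l1m n k (\<lambda>j a. F j a - Fstar n k \<sigma> j a) / l1m n k (Fstar n k \<sigma>)
            \<le> 2 * exp (- (min_sep d k \<mu> / \<tau>)\<^sup>2 / 1024)}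
      \<ge> 1 - 3 / (2 * real n)"
proof -
  interpret prob_space M by (rule P)
  define \<Delta> where "\<Delta> = min_sep d k \<mu>"
  define \<Lambda> where "\<Lambda> = (\<Delta> / \<tau>)\<^sup>2 / 128"
  define \<delta> where "\<delta> j a = vnorm d (\<lambda>l. \<mu> a l - \<mu> (\<sigma> j) l)" for j a
  define u where "u j a = (\<lambda>l. (\<mu> a l - \<mu> (\<sigma> j) l) / \<delta> j a)" for j a
  define Yf where "Yf j x = ln (\<Sum>a<k. exp ((vinner d x (u j a))\<^sup>2 / (2*\<tau>\<^sup>2)))" for j x
  define Uf where "Uf j x = (if \<Lambda>/2 \<le> Yf j x then Yf j x else 0)" for j x
  define T where "T \<omega> = (\<Sum>j<n. Uf j (g j \<omega>))" for \<omega>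
  define Mx where "Mx = max 1 (real n * exp (-\<Lambda>/8))"
  define good where "good = {\<omega> \<in> space M. \<forall>F \<in> Fset n k.
          eta n k d \<mu> \<sigma> (\<lambda>j. g j \<omega>) F \<le> eta n k d \<mu> \<sigma> (\<lambda>j. g j \<omega>) (Fstar n k \<sigma>) \<longrightarrow>
          l1m n k (\<lambda>j a. F j a - Fstar n k \<sigma> j a) / l1m n k (Fstar n k \<sigma>)
            \<le> 2 * exp (- (min_sep d k \<mu> / \<tau>)\<^sup>2 / 1024)}"
  define B where "B = {\<omega> \<in> space M. Mx * \<Lambda> / 2 \<le> T \<omega>}"
  have np: "real n > 0" using n4 by simp
  have fin: "finite {vnorm d (\<lambda>l. \<mu> a l - \<mu> b l) | a b. a < k \<and> b < k \<and> a \<noteq> b}"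
  proof (rule finite_subset)
    show "{vnorm d (\<lambda>l. \<mu> a l - \<mu> b l) | a b. a < k \<and> b < k \<and> a \<noteq> b}
      \<subseteq> (\<lambda>(a,b). vnorm d (\<lambda>l. \<mu> a l - \<mu> b l)) ` ({..<k} \<times> {..<k})" by auto
  qed auto
  have ne: "{vnorm d (\<lambda>l. \<mu> a l - \<mu> b l) | a b. a < k \<and> b < k \<and> a \<noteq> b} \<noteq> {}"
  proof -
    have "vnorm d (\<lambda>l. \<mu> 0 l - \<mu> 1 l) \<in> {vnorm d (\<lambda>l. \<mu> a l - \<mu> b l) | a b. a < k \<and> b < k \<and> a \<noteq> b}"
      by (intro CollectI exI[of _ "0::nat"] exI[of _ "1::nat"]) (use k2 in auto)
    then show ?thesis by auto
  qed
  have D0: "\<Delta> \<ge> 0"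
    using Min_in[OF fin ne] unfolding \<Delta>_def min_sep_def by (auto simp: vnorm_nonneg)
  have Dle: "\<Delta> \<le> \<delta> j a" if "j < n" "a < k" "a \<noteq> \<sigma> j" for j a
    unfolding \<Delta>_def min_sep_def \<delta>_def using that sk
    by (intro Min_le[OF fin]) blast
  have L16: "\<Lambda> \<ge> 16 * real k" using sep unfolding \<Lambda>_def \<Delta>_def by simp
  have Lpos: "\<Lambda> > 0" using L16 k2 by simp
  have \<Lambda>D: "64 * \<tau>\<^sup>2 * \<Lambda> = \<Delta>\<^sup>2 / 2" using tp unfolding \<Lambda>_def by (simp add: power_divide)
  have det: "\<omega> \<in> good" if \<omega>: "\<omega> \<in> space M" "T \<omega> < Mx * \<Lambda> / 2" for \<omega>
  proof -
    have "\<forall>F \<in> Fset n k.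
          eta n k d \<mu> \<sigma> (\<lambda>j. g j \<omega>) F \<le> eta n k d \<mu> \<sigma> (\<lambda>j. g j \<omega>) (Fstar n k \<sigma>) \<longrightarrow>
          l1m n k (\<lambda>j a. F j a - Fstar n k \<sigma> j a) / l1m n k (Fstar n k \<sigma>)
            \<le> 2 * exp (- (min_sep d k \<mu> / \<tau>)\<^sup>2 / 1024)"
    proof (intro ballI impI)
      fix F assume F: "F \<in> Fset n k"
        and le: "eta n k d \<mu> \<sigma> (\<lambda>j. g j \<omega>) F \<le> eta n k d \<mu> \<sigma> (\<lambda>j. g j \<omega>) (Fstar n k \<sigma>)"
      define N where "N j a = (vnorm d (\<lambda>l. \<mu> (\<sigma> j) l + 4 * g j \<omega> l - \<mu> a l))\<^sup>2" for j a
      have etaN: "eta n k d \<mu> \<sigma> (\<lambda>j. g j \<omega>) G = (\<Sum>j<n. \<Sum>a<k. N j a * G j a)" for G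
        unfolding eta_def N_def by simp
      define Y where "Y j = Yf j (g j \<omega>)" for j
      define e where "e j = 1 - F j (\<sigma> j)" for j
      have e01: "e j = 0 \<or> e j = 1" for j using Fset_01[OF F, of j "\<sigma> j"] unfolding e_def by auto
      have Ybd: "(vinner d (g j \<omega>) (u j a))\<^sup>2 \<le> 2 * \<tau>\<^sup>2 * Y j" if "a < k" for j a
      proof -
        have "(vinner d (g j \<omega>) (u j a))\<^sup>2 / (2*\<tau>\<^sup>2) \<le> Y j"
          unfolding Y_def Yf_def using that by (rule exp_le_sum_ln)
        then show ?thesis using tp by (simp add: divide_simps mult.commute)
      qed
      have cb: "N j a - N j (\<sigma> j) \<ge> 64 * \<tau>\<^sup>2 * (\<Lambda> - Y j)"
        if j: "j < n" and a: "a < k" and an: "a \<noteq> \<sigma> j" for j a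
      proof -
        define Z where "Z = vinner d (g j \<omega>) (u j a)"
        have "N j a - N j (\<sigma> j) = (\<delta> j a)\<^sup>2 - 8 * vinner d (g j \<omega>) (\<lambda>l. \<mu> a l - \<mu> (\<sigma> j) l)"
          unfolding N_def \<delta>_def by (rule row_diff)
        also have "vinner d (g j \<omega>) (\<lambda>l. \<mu> a l - \<mu> (\<sigma> j) l) = \<delta> j a * Z"
          unfolding Z_def u_def \<delta>_def by (rule vinner_scale)
        finally have eq: "N j a - N j (\<sigma> j) = (\<delta> j a)\<^sup>2 - 8 * (\<delta> j a * Z)" .
        have "(\<delta> j a)\<^sup>2 - 8 * (\<delta> j a * Z) \<ge> (\<delta> j a)\<^sup>2 / 2 - 32 * Z\<^sup>2" by (rule D_lower)
        moreover have "\<Delta>\<^sup>2 \<le> (\<delta> j a)\<^sup>2" using Dle[OF j a an] D0 by (intro power_mono) auto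
        moreover have "Z\<^sup>2 \<le> 2 * \<tau>\<^sup>2 * Y j" unfolding Z_def using a by (rule Ybd)
        ultimately show ?thesis using eq \<Lambda>D by (simp add: algebra_simps)
      qed
      have "(\<Sum>j<n. N j (\<sigma> j) * 0) \<le> 0" by simp
      have core: "(\<Sum>j<n. (64 * \<tau>\<^sup>2 * (\<Lambda> - Y j)) * e j) \<le> 0"
      proof -
        have "(\<Sum>j<n. (64 * \<tau>\<^sup>2 * (\<Lambda> - Y j)) * e j)
          \<le> (\<Sum>j<n. \<Sum>a<k. N j a * F j a) - (\<Sum>j<n. \<Sum>a<k. N j a * Fstar n k \<sigma> j a)"
          unfolding e_def by (rule det_core[OF F sk]) (rule cb)
        also have "\<dots> \<le> 0" using le unfolding etaN by simp
        finally show ?thesis .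
      qed
      have core2: "(\<Sum>j<n. (\<Lambda> - Y j) * e j) \<le> 0"
      proof -
        have "(\<Sum>j<n. (64 * \<tau>\<^sup>2 * (\<Lambda> - Y j)) * e j) = 64 * \<tau>\<^sup>2 * (\<Sum>j<n. (\<Lambda> - Y j) * e j)"
          by (simp add: sum_distrib_left mult.assoc)
        then show ?thesis using core tp by (simp add: mult_le_0_iff)
      qed
      have U0: "0 \<le> Uf j x" for j x unfolding Uf_def using Lpos by auto
      have YU: "Y j \<le> \<Lambda>/2 + Uf j (g j \<omega>)" for j unfolding Uf_def Y_def using Lpos by auto
      have e0: "0 \<le> e j" "e j \<le> 1" for j using e01[of j] by auto
      have s1: "(\<Sum>j<n. (\<Lambda>/2 - Uf j (g j \<omega>)) * e j) \<le> (\<Sum>j<n. (\<Lambda> - Y j) * e j)"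
      proof (rule sum_mono)
        fix j assume "j \<in> {..<n}"
        have "\<Lambda>/2 - Uf j (g j \<omega>) \<le> \<Lambda> - Y j" using YU[of j] by linarith
        then show "(\<Lambda>/2 - Uf j (g j \<omega>)) * e j \<le> (\<Lambda> - Y j) * e j"
          using e0(1)[of j] by (rule mult_right_mono)
      qed
      have s2: "(\<Sum>j<n. Uf j (g j \<omega>) * e j) \<le> T \<omega>"
        unfolding T_def by (rule sum_mono) (use U0 e0 in \<open>auto intro: mult_left_le\<close>)
      have "(\<Sum>j<n. (\<Lambda>/2 - Uf j (g j \<omega>)) * e j) = \<Lambda>/2 * (\<Sum>j<n. e j) - (\<Sum>j<n. Uf j (g j \<omega>) * e j)"
        by (simp add: sum_subtractf sum_distrib_left left_diff_distrib)
      then have "\<Lambda>/2 * (\<Sum>j<n. e j) \<le> T \<omega>" using s1 s2 core2 by linarith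
      then have "\<Lambda>/2 * (\<Sum>j<n. e j) < \<Lambda>/2 * Mx" using \<omega>(2) by (simp add: mult.commute)
      then have sM: "(\<Sum>j<n. e j) < Mx" using Lpos by simp
      have sE: "(\<Sum>j<n. e j) \<le> real n * exp (-\<Lambda>/8)"
      proof (cases "1 \<le> real n * exp (-\<Lambda>/8)")
        case True
        then show ?thesis using sM unfolding Mx_def by simp
      next
        case False
        then have "(\<Sum>j<n. e j) < 1" using sM unfolding Mx_def by simp
        then have "\<forall>j\<in>{..<n}. e j = 0"
        proof (intro ballI)
          fix j assume "j \<in> {..<n}"
          then have "e j \<le> (\<Sum>j<n. e j)" by (intro member_le_sum) (use e0 in auto)
          then show "e j = 0" using e01[of j] \<open>(\<Sum>j<n. e j) < 1\<close> by auto
        qed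
        then show ?thesis by simp
      qed
      have "l1m n k (\<lambda>j a. F j a - Fstar n k \<sigma> j a) / l1m n k (Fstar n k \<sigma>) = 2 * (\<Sum>j<n. e j) / real n"
        unfolding l1_F[OF F sk] l1_Fstar[OF sk] e_def ..
      also have "\<dots> \<le> 2 * (real n * exp (-\<Lambda>/8)) / real n"
        using sE np by (intro divide_right_mono) auto
      also have "\<dots> = 2 * exp (-\<Lambda>/8)" using np by simp
      also have "-\<Lambda>/8 = - (min_sep d k \<mu> / \<tau>)\<^sup>2 / 1024" unfolding \<Lambda>_def \<Delta>_def by simp
      finally show "l1m n k (\<lambda>j a. F j a - Fstar n k \<sigma> j a) / l1m n k (Fstar n k \<sigma>)
            \<le> 2 * exp (- (min_sep d k \<mu> / \<tau>)\<^sup>2 / 1024)" .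
    qed
    then show ?thesis unfolding good_def using \<omega>(1) by blast
  qed

  have good_sub: "space M - good \<subseteq> B" using det unfolding B_def by force
  have gm: "(\<lambda>\<omega>. g j \<omega> l) \<in> borel_measurable M" if "j < n" "l < d" for j l
    using meas that by auto
  have rm: "(\<lambda>\<omega>. restrict (g j \<omega>) {..<d}) \<in> measurable M (PiM {..<d} (\<lambda>_. borel))" if "j < n" for j
    using gm that by (intro measurable_restrict) auto
  have Yfm: "Yf j \<in> borel_measurable (PiM {..<d} (\<lambda>_. borel))" for j
    unfolding Yf_def using vinner_meas[measurable] by measurable
  have Ufm: "Uf j \<in> borel_measurable (PiM {..<d} (\<lambda>_. borel))" for j
    unfolding Uf_def using Yfm[of j] by measurable
  have Yf_r: "Yf j (restrict x {..<d}) = Yf j x" for j x unfolding Yf_def vinner_restrict ..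
  have Uf_r: "Uf j (restrict x {..<d}) = Uf j x" for j x unfolding Uf_def Yf_r ..
  have Ugm: "(\<lambda>\<omega>. Uf j (g j \<omega>)) \<in> borel_measurable M" if "j < n" for j
    using measurable_compose[OF rm[OF that] Ufm[of j]] by (simp add: Uf_r)
  have Ygm: "(\<lambda>\<omega>. Yf j (g j \<omega>)) \<in> borel_measurable M" if "j < n" for j
    using measurable_compose[OF rm[OF that] Yfm[of j]] by (simp add: Yf_r)
  have Tm: "T \<in> borel_measurable M"
    unfolding T_def by (intro borel_measurable_sum) (use Ugm in auto)
  have etam: "(\<lambda>\<omega>. eta n k d \<mu> \<sigma> (\<lambda>j. g j \<omega>) G) \<in> borel_measurable M" for G
    unfolding eta_def
    by (intro borel_measurable_sum borel_measurable_times borel_measurable_power vnorm_meas2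
        borel_measurable_diff borel_measurable_add borel_measurable_const) (use gm in auto)
  have sets_good: "good \<in> sets M"
    unfolding good_def
  proof (rule sets.sets_Collect_finite_All[OF _ Fset_finite])
    fix F
    show "{\<omega> \<in> space M. eta n k d \<mu> \<sigma> (\<lambda>j. g j \<omega>) F \<le> eta n k d \<mu> \<sigma> (\<lambda>j. g j \<omega>) (Fstar n k \<sigma>) \<longrightarrow>
          l1m n k (\<lambda>j a. F j a - Fstar n k \<sigma> j a) / l1m n k (Fstar n k \<sigma>)
            \<le> 2 * exp (- (min_sep d k \<mu> / \<tau>)\<^sup>2 / 1024)} \<in> sets M"
      using etam[of F] etam[of "Fstar n k \<sigma>"] by measurable
  qed
  have sets_B: "B \<in> sets M" unfolding B_def using Tm by measurable
  have probB: "measure M B \<le> 1 / real n"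
  proof -
    define c where "c = exp (-\<Lambda>/4)"
    have c0: "0 \<le> c" unfolding c_def by simp
    have E1: "(\<integral>\<^sup>+\<omega>. ennreal (exp (Yf j (g j \<omega>))) \<partial>M) \<le> 2 * of_nat k" if j: "j < n" for j
    proof -
      have "(\<integral>\<^sup>+\<omega>. ennreal (exp (Yf j (g j \<omega>))) \<partial>M)
          = (\<integral>\<^sup>+\<omega>. (\<Sum>a<k. ennreal (exp ((vinner d (g j \<omega>) (u j a))\<^sup>2 / (2*\<tau>\<^sup>2)))) \<partial>M)"
      proof (rule nn_integral_cong)
        fix \<omega>
        have "0 < (\<Sum>a<k. exp ((vinner d (g j \<omega>) (u j a))\<^sup>2 / (2*\<tau>\<^sup>2)))"
          using k2 by (intro sum_pos) (auto simp: lessThan_empty_iff)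
        then show "ennreal (exp (Yf j (g j \<omega>))) = (\<Sum>a<k. ennreal (exp ((vinner d (g j \<omega>) (u j a))\<^sup>2 / (2*\<tau>\<^sup>2))))"
          unfolding Yf_def by simp
      qed
      also have "\<dots> = (\<Sum>a<k. \<integral>\<^sup>+\<omega>. ennreal (exp ((vinner d (g j \<omega>) (u j a))\<^sup>2 / (2*\<tau>\<^sup>2))) \<partial>M)"
      proof (rule nn_integral_sum)
        fix a
        have "(\<lambda>\<omega>. vinner d (g j \<omega>) (u j a)) \<in> borel_measurable M"
          using gm j by (intro vinner_meas2) auto
        then show "(\<lambda>\<omega>. ennreal (exp ((vinner d (g j \<omega>) (u j a))\<^sup>2 / (2*\<tau>\<^sup>2)))) \<in> borel_measurable M"
          by measurable
      qed
      also have "\<dots> \<le> (\<Sum>a<k. 2)"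
      proof (rule sum_mono)
        fix a
        have "vnorm d (u j a) = 1 \<or> (\<forall>l. u j a l = 0)"
        proof (cases "\<delta> j a = 0")
          case True then show ?thesis unfolding u_def by simp
        next
          case False then show ?thesis unfolding u_def \<delta>_def by (simp add: vnorm_unit)
        qed
        then show "(\<integral>\<^sup>+\<omega>. ennreal (exp ((vinner d (g j \<omega>) (u j a))\<^sup>2 / (2*\<tau>\<^sup>2))) \<partial>M) \<le> 2"
          using ps j by (intro subg[OF P tp]) auto
      qed
      finally show ?thesis by (simp add: mult.commute)
    qed
    have E2: "(\<integral>\<^sup>+\<omega>. ennreal (exp (Uf j (g j \<omega>) / 2)) \<partial>M) \<le> ennreal (1 + 2 * real k * c)"
      if j: "j < n" for j
    proof -
      have "(\<integral>\<^sup>+\<omega>. ennreal (exp (Uf j (g j \<omega>) / 2)) \<partial>M)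
          \<le> (\<integral>\<^sup>+\<omega>. 1 + ennreal c * ennreal (exp (Yf j (g j \<omega>))) \<partial>M)"
      proof (rule nn_integral_mono)
        fix \<omega>
        have "exp (Uf j (g j \<omega>) / 2) \<le> 1 + c * exp (Yf j (g j \<omega>))"
        proof (cases "\<Lambda>/2 \<le> Yf j (g j \<omega>)")
          case True
          then have "exp (Uf j (g j \<omega>) / 2) = exp (Yf j (g j \<omega>) / 2)" unfolding Uf_def by simp
          also have "\<dots> \<le> exp (-\<Lambda>/4 + Yf j (g j \<omega>))" using True by simp
          also have "\<dots> = c * exp (Yf j (g j \<omega>))" unfolding c_def by (simp add: exp_add[symmetric])
          finally show ?thesis by simp
        next
          case False
          then show ?thesis unfolding Uf_def using c0 by simp
        qed
        then have "ennreal (exp (Uf j (g j \<omega>) / 2)) \<le> ennreal (1 + c * exp (Yf j (g j \<omega>)))"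
          by (rule ennreal_leI)
        also have "ennreal (1 + c * exp (Yf j (g j \<omega>))) = 1 + ennreal c * ennreal (exp (Yf j (g j \<omega>)))"
          using c0 by (simp add: ennreal_mult)
        finally show "ennreal (exp (Uf j (g j \<omega>) / 2)) \<le> 1 + ennreal c * ennreal (exp (Yf j (g j \<omega>)))" .
      qed
      also have "\<dots> = (\<integral>\<^sup>+\<omega>. 1 \<partial>M) + ennreal c * (\<integral>\<^sup>+\<omega>. ennreal (exp (Yf j (g j \<omega>))) \<partial>M)"
        using Ygm[OF j] by (subst nn_integral_add) (auto intro!: nn_integral_cmult)
      also have "\<dots> \<le> 1 + ennreal c * (2 * of_nat k)"
        using E1[OF j] by (auto intro!: add_mono mult_left_mono simp: emeasure_space_1)
      also have "\<dots> = ennreal (1 + 2 * real k * c)"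
        using c0 by (simp add: ennreal_mult ennreal_of_nat_eq_real_of_nat mult.commute)
      finally show ?thesis .
    qed
    have indep: "indep_vars (\<lambda>_. borel) (\<lambda>j \<omega>. ennreal (exp (Uf j (g j \<omega>) / 2))) {..<n}"
    proof -
      have "indep_vars (\<lambda>_. borel) (\<lambda>j \<omega>. ennreal (exp (Uf j (restrict (g j \<omega>) {..<d}) / 2))) {..<n}"
        using Ufm by (intro indep_vars_compose2[OF ind, of "\<lambda>j x. ennreal (exp (Uf j x / 2))"]) auto
      then show ?thesis by (simp add: Uf_r)
    qed
    have ET: "(\<integral>\<^sup>+\<omega>. ennreal (exp (T \<omega> / 2)) \<partial>M) \<le> ennreal (exp (2 * real n * real k * c))"
    proof -
      have "(\<integral>\<^sup>+\<omega>. ennreal (exp (T \<omega> / 2)) \<partial>M) = (\<integral>\<^sup>+\<omega>. ennreal (\<Prod>j<n. exp (Uf j (g j \<omega>) / 2)) \<partial>M)"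
        unfolding T_def by (simp add: exp_sum sum_divide_distrib)
      also have "\<dots> = (\<integral>\<^sup>+\<omega>. (\<Prod>j<n. ennreal (exp (Uf j (g j \<omega>) / 2))) \<partial>M)"
        by (simp add: prod_ennreal)
      also have "\<dots> = (\<Prod>j<n. \<integral>\<^sup>+\<omega>. ennreal (exp (Uf j (g j \<omega>) / 2)) \<partial>M)"
        by (rule indep_vars_nn_integral) (use indep in auto)
      also have "\<dots> \<le> (\<Prod>j<n. ennreal (1 + 2 * real k * c))"
        by (rule prod_mono_ennreal) (use E2 in auto)
      also have "\<dots> = ennreal ((1 + 2 * real k * c) ^ n)"
        using c0 by (simp add: ennreal_power del: ennreal_plus)
      also have "\<dots> \<le> ennreal (exp (2 * real k * c) ^ n)"
        using c0 by (intro ennreal_leI power_mono) auto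
      also have "exp (2 * real k * c) ^ n = exp (2 * real n * real k * c)"
        by (simp add: exp_of_nat_mult[symmetric] mult.assoc mult.left_commute)
      finally show ?thesis .
    qed
    have "emeasure M B = (\<integral>\<^sup>+\<omega>. indicator B \<omega> \<partial>M)" using sets_B by simp
    also have "\<dots> \<le> (\<integral>\<^sup>+\<omega>. ennreal (exp (- Mx * \<Lambda> / 4)) * ennreal (exp (T \<omega> / 2)) \<partial>M)"
    proof (rule nn_integral_mono)
      fix \<omega>
      show "indicator B \<omega> \<le> ennreal (exp (- Mx * \<Lambda> / 4)) * ennreal (exp (T \<omega> / 2))"
      proof (cases "\<omega> \<in> B")
        case True
        then have "Mx * \<Lambda> / 2 \<le> T \<omega>" unfolding B_def by simp
        then have "1 \<le> exp (- Mx * \<Lambda> / 4 + T \<omega> / 2)" by simp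
        then have "1 \<le> exp (- Mx * \<Lambda> / 4) * exp (T \<omega> / 2)" by (simp only: exp_add)
        then have "ennreal 1 \<le> ennreal (exp (- Mx * \<Lambda> / 4) * exp (T \<omega> / 2))" by (rule ennreal_leI)
        then show ?thesis using True by (simp add: ennreal_mult)
      qed simp
    qed
    also have "\<dots> = ennreal (exp (- Mx * \<Lambda> / 4)) * (\<integral>\<^sup>+\<omega>. ennreal (exp (T \<omega> / 2)) \<partial>M)"
    proof (rule nn_integral_cmult)
      have "(\<lambda>\<omega>. T \<omega> / 2) \<in> borel_measurable M" using Tm by (rule borel_measurable_divide) simp
      then show "(\<lambda>\<omega>. ennreal (exp (T \<omega> / 2))) \<in> borel_measurable M"
        by (intro measurable_compose[OF _ measurable_ennreal] measurable_compose[OF _ borel_measurable_exp])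
    qed
    also have "\<dots> \<le> ennreal (exp (- Mx * \<Lambda> / 4)) * ennreal (exp (2 * real n * real k * c))"
      using ET by (rule mult_left_mono) simp
    also have "\<dots> = ennreal (exp (2 * real n * real k * exp (-\<Lambda>/4) - Mx * \<Lambda> / 4))"
      unfolding c_def by (simp add: ennreal_mult[symmetric] exp_add[symmetric])
    also have "\<dots> \<le> ennreal (1 / real n)"
      using final_arith[OF L16 k2, of n] n4 unfolding Mx_def by (intro ennreal_leI) auto
    finally have "emeasure M B \<le> ennreal (1 / real n)" .
    then show ?thesis by (simp add: emeasure_eq_measure)
  qed
  have "measure M (space M - good) \<le> measure M B"
    using good_sub sets_B by (intro finite_measure_mono)
  moreover have "measure M good = 1 - measure M (space M - good)"
    using sets_good by (simp add: prob_compl)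
  moreover have "1 / real n \<le> 3 / (2 * real n)" using np by (simp add: divide_simps)
  ultimately show ?thesis using probB unfolding good_def by linarith
qed

theorem theorem2:
  shows "\<exists>Cs Cg Ce :: real. Cs > 0 \<and> Cg > 0 \<and> Ce > 0 \<and>
    (\<forall>(M :: 'a measure) (n::nat) (k::nat) (d::nat) (\<mu> :: nat \<Rightarrow> nat \<Rightarrow> real) (\<sigma> :: nat \<Rightarrow> nat)
       (g :: nat \<Rightarrow> 'a \<Rightarrow> nat \<Rightarrow> real) (\<tau>::real).
      prob_space M \<and> n \<ge> 4 \<and> k \<ge> 2 \<and> k dvd n
      \<and> (\<forall>i<n. \<sigma> i < k) \<and> (\<forall>a<k. card {i. i < n \<and> \<sigma> i = a} = n div k)
      \<and> (\<forall>i<n. \<forall>l<d. (\<lambda>\<omega>. g i \<omega> l) \<in> borel_measurable M)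
      \<and> prob_space.indep_vars M (\<lambda>_. PiM {..<d} (\<lambda>_. borel))
            (\<lambda>i \<omega>. restrict (g i \<omega>) {..<d}) {..<n}
      \<and> \<tau> > 0 \<and> (\<forall>i<n. psi2_vec M d (g i) \<le> ereal \<tau>)
      \<and> (min_sep d k \<mu> / \<tau>)\<^sup>2 \<ge> Cs * real k
      \<longrightarrow>
      measure M {\<omega> \<in> space M. \<forall>F \<in> Fset n k.
          eta n k d \<mu> \<sigma> (\<lambda>j. g j \<omega>) F \<le> eta n k d \<mu> \<sigma> (\<lambda>j. g j \<omega>) (Fstar n k \<sigma>) \<longrightarrow>
          l1m n k (\<lambda>j a. F j a - Fstar n k \<sigma> j a) / l1m n k (Fstar n k \<sigma>)
            \<le> Cg * exp (- (min_sep d k \<mu> / \<tau>)\<^sup>2 / Ce)}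
      \<ge> 1 - 3 / (2 * real n))"
    apply (rule exI[of _ "2048::real"], rule exI[of _ "2::real"], rule exI[of _ "1024::real"])
  apply (intro conjI allI impI)
     apply simp
    apply simp
   apply simp
  apply (elim conjE)
  apply (rule main)
  apply assumption+
  done

end
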